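(* Assume the setting described in the context. Then for every $t\ge0$ and every $z\in\mathbb C$ with $\omega_0^\epsilon(z)=0$ one has $\overline\partial X^\epsilon(t,z)=0$; that is, $X^\epsilon(t,\cdot)$ is conformal outside $\operatorname{supp}\omega_0^\epsilon$.
   Context: $\overline\partial=\frac12(\partial_x+i\partial_y)$, $\partial=\frac12(\partial_x-i\partial_y)$. Fix $\theta\in[0,2\pi]$ and $K(z)=\frac{e^{i\theta}}{2\pi z}$ on $\mathbb C\cong\mathbb R^2$. Let $\omega_0\in L^\infty(\mathbb C)$ be real-valued with compact support. For $\epsilon>0$ let $\omega_0^\epsilon\in C^\infty_c(\mathbb C)$ be real-valued with $\|\omega_0^\epsilon\|_\infty\le\|\omega_0\|_\infty$, $\|\omega_0^\epsilon\|_1\le\|\omega_0\|_1$ and $\|\omega_0^\epsilon-\omega_0\|_1\to0$. Let $\omega^\epsilon$ be the unique smooth solution of $\partial_t\omega^\epsilon+\mathbf v^\epsilon\cdot\nabla\omega^\epsilon=0$, $\mathbf v^\epsilon(t,\cdot)=K\ast\omega^\epsilon(t,\cdot)$, $\omega^\epsilon(0,\cdot)=\omega_0^\epsilon$, and let $X^\epsilon$ be the flow of $\mathbf v^\epsilon$: $\frac{d}{dt}X^\epsilon(t,z)=\mathbf v^\epsilon(t,X^\epsilon(t,z))$, $X^\epsilon(0,z)=z$ (a smooth family of diffeomorphisms of $\mathbb C$ with $\omega^\epsilon(t,X^\epsilon(t,z))=\omega_0^\epsilon(z)$). *)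

theory Defs
  imports "HOL-Analysis.Analysis"
begin

fun iter_dd :: "'a list \<Rightarrow> ('a::real_normed_vector \<Rightarrow> 'b::real_normed_vector) \<Rightarrow> 'a \<Rightarrow> 'b" where
  "iter_dd [] f = f"
| "iter_dd (d # ds) f = (\<lambda>x. frechet_derivative (iter_dd ds f) (at x) d)"

definition smooth_on :: "'a set \<Rightarrow> ('a::real_normed_vector \<Rightarrow> 'b::real_normed_vector) \<Rightarrow> bool" where
  "smooth_on S f \<longleftrightarrow> (\<exists>U g. open U \<and> S \<subseteq> U \<and> (\<forall>x\<in>S. g x = f x) \<and>
      (\<forall>ds. iter_dd ds g differentiable_on U))"

definition dbar :: "(complex \<Rightarrow> complex) \<Rightarrow> complex \<Rightarrow> complex" where
  "dbar f z = (frechet_derivative f (at z) 1 + \<i> * frechet_derivative f (at z) \<i>) / 2"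

definition kernel :: "real \<Rightarrow> complex \<Rightarrow> complex" where
  "kernel \<theta> z = exp (\<i> * of_real \<theta>) / (2 * of_real pi * z)"

end

theory Submission
  imports Defs
begin

lemma schwarz_step:
  fixes g :: "'a::real_normed_vector \<Rightarrow> real"
  assumes U: "open U" and ball: "ball p r \<subseteq> U"
    and dg: "\<And>q. q \<in> U \<Longrightarrow> (g has_derivative g' q) (at q)"
    and da: "\<And>q. q \<in> U \<Longrightarrow> ((\<lambda>q. g' q a) has_derivative ga q) (at q)"
    and x: "0 < x" "x * (norm a + norm b) < r"
  shows "\<exists>q. dist q p \<le> x * (norm a + norm b) \<and>
     g (p + x *\<^sub>R a + x *\<^sub>R b) - g (p + x *\<^sub>R a) - g (p + x *\<^sub>R b) + g p = x * (x * ga q b)"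
proof -
  have inU: "p + s *\<^sub>R a + t *\<^sub>R b \<in> U" if "0 \<le> s" "s \<le> x" "0 \<le> t" "t \<le> x" for s t
  proof -
    have "norm (s *\<^sub>R a + t *\<^sub>R b) \<le> s * norm a + t * norm b"
      using that by (metis abs_of_nonneg norm_scaleR norm_triangle_ineq)
    also have "\<dots> \<le> x * norm a + x * norm b"
      using that by (intro add_mono mult_right_mono) auto
    finally have "dist (p + s *\<^sub>R a + t *\<^sub>R b) p < r" using x by (simp add: dist_norm algebra_simps)
    then show ?thesis using ball by (auto simp: dist_commute)
  qed
  define \<psi> where "\<psi> s = g (p + s *\<^sub>R a + x *\<^sub>R b) - g (p + s *\<^sub>R a)" for s
  have d\<psi>: "(\<psi> has_real_derivative (g' (p + s *\<^sub>R a + x *\<^sub>R b) a - g' (p + s *\<^sub>R a) a)) (at s)"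
    if "0 \<le> s" "s \<le> x" for s
  proof -
    have l1: "((\<lambda>s. p + s *\<^sub>R a + x *\<^sub>R b) has_derivative (\<lambda>h. h *\<^sub>R a)) (at s)"
      by (auto intro!: derivative_eq_intros)
    have l2: "((\<lambda>s. p + s *\<^sub>R a) has_derivative (\<lambda>h. h *\<^sub>R a)) (at s)"
      by (auto intro!: derivative_eq_intros)
    have h1: "((\<lambda>s. g (p + s *\<^sub>R a + x *\<^sub>R b)) has_derivative (\<lambda>h. g' (p + s *\<^sub>R a + x *\<^sub>R b) (h *\<^sub>R a))) (at s)"
      by (rule has_derivative_compose[OF l1 dg]) (use inU that x in auto)
    have h2: "((\<lambda>s. g (p + s *\<^sub>R a)) has_derivative (\<lambda>h. g' (p + s *\<^sub>R a) (h *\<^sub>R a))) (at s)"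
      by (rule has_derivative_compose[OF l2 dg]) (use inU[of s 0] that x in auto)
    have lin1: "linear (g' (p + s *\<^sub>R a + x *\<^sub>R b))" using dg[OF inU[of s x]] that x
      by (auto dest: has_derivative_linear)
    have lin2: "linear (g' (p + s *\<^sub>R a))" using dg[OF inU[of s 0]] that x
      by (auto dest: has_derivative_linear)
    have "(\<lambda>h. g' (p + s *\<^sub>R a + x *\<^sub>R b) (h *\<^sub>R a) - g' (p + s *\<^sub>R a) (h *\<^sub>R a))
       = (\<lambda>h. (g' (p + s *\<^sub>R a + x *\<^sub>R b) a - g' (p + s *\<^sub>R a) a) * h)"
      by (simp only: linear.scaleR[OF lin1] linear.scaleR[OF lin2]) (simp add: algebra_simps)
    then show ?thesis unfolding has_field_derivative_def \<psi>_def
      using has_derivative_diff[OF h1 h2] by simp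
  qed
  obtain \<xi> where \<xi>: "0 < \<xi>" "\<xi> < x"
    and e1: "\<psi> x - \<psi> 0 = (x - 0) * (g' (p + \<xi> *\<^sub>R a + x *\<^sub>R b) a - g' (p + \<xi> *\<^sub>R a) a)"
    using MVT2[OF x(1), of \<psi> "\<lambda>s. g' (p + s *\<^sub>R a + x *\<^sub>R b) a - g' (p + s *\<^sub>R a) a"] d\<psi> by auto
  define chi0 where "chi0 t = g' (p + \<xi> *\<^sub>R a + t *\<^sub>R b) a" for t
  have dchi0: "(chi0 has_real_derivative ga (p + \<xi> *\<^sub>R a + t *\<^sub>R b) b) (at t)"
    if "0 \<le> t" "t \<le> x" for t
  proof -
    have l1: "((\<lambda>t. p + \<xi> *\<^sub>R a + t *\<^sub>R b) has_derivative (\<lambda>h. h *\<^sub>R b)) (at t)"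
      by (auto intro!: derivative_eq_intros)
    have h1: "(chi0 has_derivative (\<lambda>h. ga (p + \<xi> *\<^sub>R a + t *\<^sub>R b) (h *\<^sub>R b))) (at t)"
      unfolding chi0_def
      by (rule has_derivative_compose[OF l1 da]) (use inU \<xi> that in auto)
    have lin1: "linear (ga (p + \<xi> *\<^sub>R a + t *\<^sub>R b))" using da[OF inU[of \<xi> t]] that \<xi>
      by (auto dest: has_derivative_linear)
    have "(\<lambda>h. ga (p + \<xi> *\<^sub>R a + t *\<^sub>R b) (h *\<^sub>R b)) = (\<lambda>h. ga (p + \<xi> *\<^sub>R a + t *\<^sub>R b) b * h)"
      by (simp only: linear.scaleR[OF lin1]) (simp add: mult.commute)
    then show ?thesis unfolding has_field_derivative_def
      using h1 by simp
  qed
  obtain \<eta> where \<eta>: "0 < \<eta>" "\<eta> < x"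
    and e2: "chi0 x - chi0 0 = (x - 0) * ga (p + \<xi> *\<^sub>R a + \<eta> *\<^sub>R b) b"
    using MVT2[OF x(1), of chi0 "\<lambda>t. ga (p + \<xi> *\<^sub>R a + t *\<^sub>R b) b"] dchi0 by auto
  define q where "q = p + \<xi> *\<^sub>R a + \<eta> *\<^sub>R b"
  have "dist q p \<le> x * (norm a + norm b)"
  proof -
    have "dist q p = norm (\<xi> *\<^sub>R a + \<eta> *\<^sub>R b)" by (simp add: q_def dist_norm)
    also have "\<dots> \<le> \<xi> * norm a + \<eta> * norm b"
      using \<xi> \<eta> by (metis abs_of_nonneg less_imp_le norm_scaleR norm_triangle_ineq)
    also have "\<dots> \<le> x * norm a + x * norm b"
      using \<xi> \<eta> by (intro add_mono mult_right_mono) auto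
    finally show ?thesis by (simp add: algebra_simps)
  qed
  moreover have "g (p + x *\<^sub>R a + x *\<^sub>R b) - g (p + x *\<^sub>R a) - g (p + x *\<^sub>R b) + g p = x * (x * ga q b)"
  proof -
    have "g (p + x *\<^sub>R a + x *\<^sub>R b) - g (p + x *\<^sub>R a) - g (p + x *\<^sub>R b) + g p = \<psi> x - \<psi> 0"
      by (simp add: \<psi>_def)
    also have "\<dots> = x * (chi0 x - chi0 0)" using e1 by (simp add: chi0_def)
    also have "\<dots> = x * (x * ga q b)" using e2 by (simp add: q_def)
    finally show ?thesis .
  qed
  ultimately show ?thesis by blast
qed

lemma schwarz_real:
  fixes g :: "'a::real_normed_vector \<Rightarrow> real"
  assumes U: "open U" and p: "p \<in> U"
    and dg: "\<And>q. q \<in> U \<Longrightarrow> (g has_derivative g' q) (at q)"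
    and da: "\<And>q. q \<in> U \<Longrightarrow> ((\<lambda>q. g' q a) has_derivative ga q) (at q)"
    and db: "\<And>q. q \<in> U \<Longrightarrow> ((\<lambda>q. g' q b) has_derivative gb q) (at q)"
    and ca: "continuous (at p) (\<lambda>q. ga q b)"
    and cb: "continuous (at p) (\<lambda>q. gb q a)"
  shows "ga p b = gb p a"
proof -
  obtain r where r: "r > 0" "ball p r \<subseteq> U" using U p open_contains_ball by blast
  define N where "N = norm a + norm b"
  have N: "N \<ge> 0" by (simp add: N_def)
  define x where "x n = r / (2 * (N + 1) * (real n + 1))" for n :: nat
  have xpos: "x n > 0" for n using r N by (simp add: x_def)
  have xN: "x n * N < r" for n
  proof -
    have "x n * N \<le> x n * (N + 1)" using xpos[of n] by (intro mult_left_mono) auto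
    also have "\<dots> = r / (2 * (real n + 1))"
    proof -
      have "N + 1 \<noteq> 0" using N by simp
      have "x n * (N + 1) = (r * (N+1)) / ((2 * (real n + 1)) * (N + 1))"
        unfolding x_def by (simp add: algebra_simps)
      also have "\<dots> = r / (2 * (real n + 1))" using \<open>N + 1 \<noteq> 0\<close>
        by (rule nonzero_mult_divide_mult_cancel_right)
      finally show ?thesis .
    qed
    also have "\<dots> < r" using r by (simp add: field_simps add_pos_nonneg)
    finally show ?thesis .
  qed
  have x0: "x \<longlonglongrightarrow> 0"
  proof -
    have "(\<lambda>n. (r / (2 * (N + 1))) * inverse (real (Suc n))) \<longlonglongrightarrow> (r / (2 * (N + 1))) * 0"
      by (intro tendsto_mult tendsto_const LIMSEQ_inverse_real_of_nat)
    moreover have "x = (\<lambda>n. (r / (2 * (N + 1))) * inverse (real (Suc n)))"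
      by (rule ext) (simp add: x_def divide_inverse inverse_mult_distrib mult_ac add.commute)
    ultimately show ?thesis by simp
  qed
  have "\<forall>n. \<exists>q q'. dist q p \<le> x n * N \<and> dist q' p \<le> x n * N \<and> ga q b = gb q' a"
  proof
    fix n
    obtain q where q: "dist q p \<le> x n * N"
      "g (p + x n *\<^sub>R a + x n *\<^sub>R b) - g (p + x n *\<^sub>R a) - g (p + x n *\<^sub>R b) + g p = x n * (x n * ga q b)"
      using schwarz_step[OF U r(2) dg da xpos[of n]] xN[of n] unfolding N_def by blast
    obtain q' where q': "dist q' p \<le> x n * N"
      "g (p + x n *\<^sub>R b + x n *\<^sub>R a) - g (p + x n *\<^sub>R b) - g (p + x n *\<^sub>R a) + g p = x n * (x n * gb q' a)"
      using schwarz_step[OF U r(2) dg db xpos[of n], of a] xN[of n] unfolding N_def by (auto simp: add.commute)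
    have "x n * (x n * ga q b) = x n * (x n * gb q' a)"
      using q(2) q'(2) by (simp add: algebra_simps)
    then have "ga q b = gb q' a" using xpos[of n] by simp
    then show "\<exists>q q'. dist q p \<le> x n * N \<and> dist q' p \<le> x n * N \<and> ga q b = gb q' a"
      using q q' by blast
  qed
  then obtain Q Q' where QQ: "\<And>n. dist (Q n) p \<le> x n * N" "\<And>n. dist (Q' n) p \<le> x n * N"
    "\<And>n. ga (Q n) b = gb (Q' n) a" by metis
  have xN0: "(\<lambda>n. x n * N) \<longlonglongrightarrow> 0" using tendsto_mult_left_zero[OF x0, of N] by simp
  have "Q \<longlonglongrightarrow> p"
    by (rule tendsto_dist_iff[THEN iffD2], rule Lim_null_comparison[OF _ xN0])
       (simp add: QQ(1))
  moreover have "Q' \<longlonglongrightarrow> p"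
    by (rule tendsto_dist_iff[THEN iffD2], rule Lim_null_comparison[OF _ xN0])
       (simp add: QQ(2))
  ultimately have l1: "(\<lambda>n. ga (Q n) b) \<longlonglongrightarrow> ga p b" and l2: "(\<lambda>n. gb (Q' n) a) \<longlonglongrightarrow> gb p a"
    using ca cb by (auto intro: isCont_tendsto_compose)
  show ?thesis using LIMSEQ_unique[OF l1] l2 QQ(3) by simp
qed

lemma diff_on_open_at:
  assumes "f differentiable_on U" "open U" "q \<in> U"
  shows "(f has_derivative frechet_derivative f (at q)) (at q)"
  using assms by (metis at_within_open differentiable_on_def frechet_derivative_works)

lemma schwarz_frechet:
  fixes G :: "'a::real_normed_vector \<Rightarrow> 'b::real_inner"
  assumes U: "open U" and p: "p \<in> U"
    and dG: "G differentiable_on U"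
    and dA: "(\<lambda>q. frechet_derivative G (at q) a) differentiable_on U"
    and dB: "(\<lambda>q. frechet_derivative G (at q) b) differentiable_on U"
    and cA: "continuous_on U (\<lambda>q. frechet_derivative (\<lambda>q. frechet_derivative G (at q) a) (at q) b)"
    and cB: "continuous_on U (\<lambda>q. frechet_derivative (\<lambda>q. frechet_derivative G (at q) b) (at q) a)"
  shows "frechet_derivative (\<lambda>q. frechet_derivative G (at q) a) (at p) b =
         frechet_derivative (\<lambda>q. frechet_derivative G (at q) b) (at p) a"
    (is "?L = ?R")
proof -
  have *: "(?L - ?R) \<bullet> e = 0" for e
  proof -
    have "frechet_derivative (\<lambda>q. frechet_derivative G (at q) a) (at p) b \<bullet> e =
          frechet_derivative (\<lambda>q. frechet_derivative G (at q) b) (at p) a \<bullet> e"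
    proof (rule schwarz_real[OF U p, where g="\<lambda>q. G q \<bullet> e"
        and g'="\<lambda>q h. frechet_derivative G (at q) h \<bullet> e"
        and ga="\<lambda>q h. frechet_derivative (\<lambda>q. frechet_derivative G (at q) a) (at q) h \<bullet> e"
        and gb="\<lambda>q h. frechet_derivative (\<lambda>q. frechet_derivative G (at q) b) (at q) h \<bullet> e"])
      fix q assume q: "q \<in> U"
      show "((\<lambda>q. G q \<bullet> e) has_derivative (\<lambda>h. frechet_derivative G (at q) h \<bullet> e)) (at q)"
        by (rule has_derivative_inner_left[OF diff_on_open_at[OF dG U q]])
      show "((\<lambda>q. frechet_derivative G (at q) a \<bullet> e) has_derivative
          (\<lambda>h. frechet_derivative (\<lambda>q. frechet_derivative G (at q) a) (at q) h \<bullet> e)) (at q)"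
        by (rule has_derivative_inner_left[OF diff_on_open_at[OF dA U q]])
      show "((\<lambda>q. frechet_derivative G (at q) b \<bullet> e) has_derivative
          (\<lambda>h. frechet_derivative (\<lambda>q. frechet_derivative G (at q) b) (at q) h \<bullet> e)) (at q)"
        by (rule has_derivative_inner_left[OF diff_on_open_at[OF dB U q]])
    next
      show "continuous (at p) (\<lambda>q. frechet_derivative (\<lambda>q. frechet_derivative G (at q) a) (at q) b \<bullet> e)"
        using cA U p by (intro continuous_intros) (simp add: continuous_on_eq_continuous_at)
      show "continuous (at p) (\<lambda>q. frechet_derivative (\<lambda>q. frechet_derivative G (at q) b) (at q) a \<bullet> e)"
        using cB U p by (intro continuous_intros) (simp add: continuous_on_eq_continuous_at)
    qed
    then show ?thesis by (simp add: inner_diff_left)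
  qed
  show ?thesis using *[of "?L - ?R"] by simp
qed

lemma dyadic_exists:
  fixes r \<rho> :: real
  assumes "0 < \<rho>" "\<rho> < r"
  shows "\<exists>k::nat. r / 2 ^ (k + 1) \<le> \<rho> \<and> \<rho> < r / 2 ^ k"
proof -
  have ex: "\<exists>k::nat. r / 2 ^ k \<le> \<rho>"
  proof -
    obtain k :: nat where "r / \<rho> < 2 ^ k"
      using real_arch_pow[of 2 "r / \<rho>"] by auto
    then have "r < 2 ^ k * \<rho>" using assms by (simp add: divide_less_eq)
    then have "r / 2 ^ k < \<rho>" by (simp add: divide_less_eq mult.commute)
    then show ?thesis by (intro exI[of _ k]) simp
  qed
  define m where "m = (LEAST k. r / 2 ^ k \<le> \<rho>)"
  have m: "r / 2 ^ m \<le> \<rho>" unfolding m_def by (rule LeastI_ex[OF ex])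
  have least: "\<And>k. r / 2 ^ k \<le> \<rho> \<Longrightarrow> m \<le> k" unfolding m_def by (rule Least_le)
  have "m \<noteq> 0" using m assms by (intro notI) simp
  then obtain k where k: "m = k + 1" using not0_implies_Suc by auto
  have "\<not> r / 2 ^ k \<le> \<rho>" using least[of k] k by auto
  then show ?thesis using m k by (intro exI[of _ k]) auto
qed

lemma inv_norm_ball_nn_integral:
  fixes x :: complex
  assumes r: "0 < r"
  shows "(\<integral>\<^sup>+ y. ennreal (indicator (ball x r) y / norm (x - y)) \<partial>lborel) \<le> ennreal (4 * pi * r)"
proof -
  define f where "f k y = ennreal (2 ^ (k + 1) / r * indicator (ball x (r / 2 ^ k)) y)" for k :: nat and y :: complex
  have pt: "ennreal (indicator (ball x r) y / norm (x - y)) \<le> (\<Sum>k. f k y)" for y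
  proof (cases "y \<in> ball x r \<and> y \<noteq> x")
    case False
    then show ?thesis by (auto simp: indicator_def)
  next
    case True
    define \<rho> where "\<rho> = norm (x - y)"
    have \<rho>: "0 < \<rho>" "\<rho> < r" using True by (auto simp: \<rho>_def dist_norm)
    obtain k where k: "r / 2 ^ (k + 1) \<le> \<rho>" "\<rho> < r / 2 ^ k" using dyadic_exists[OF \<rho>] by blast
    have "indicator (ball x r) y / norm (x - y) = 1 / \<rho>" using True by (simp add: \<rho>_def)
    also have "\<dots> \<le> 2 ^ (k + 1) / r"
      using k(1) \<rho> r by (simp add: field_simps)
    also have "\<dots> = 2 ^ (k + 1) / r * indicator (ball x (r / 2 ^ k)) y"
      using k(2) by (simp add: \<rho>_def dist_norm indicator_def)
    finally have "ennreal (indicator (ball x r) y / norm (x - y)) \<le> f k y"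
      unfolding f_def by (rule ennreal_leI)
    also have "f k y \<le> (\<Sum>k. f k y)"
      using sum_le_suminf[OF summableI, of "{k}" "\<lambda>k. f k y"] by simp
    finally show ?thesis .
  qed
  have "(\<integral>\<^sup>+ y. ennreal (indicator (ball x r) y / norm (x - y)) \<partial>lborel) \<le> (\<integral>\<^sup>+ y. (\<Sum>k. f k y) \<partial>lborel)"
    by (intro nn_integral_mono pt)
  also have "\<dots> = (\<Sum>k. integral\<^sup>N lborel (f k))"
    by (rule nn_integral_suminf) (unfold f_def, intro measurable_compose[OF _ measurable_ennreal] borel_measurable_times borel_measurable_const borel_measurable_indicator, auto)
  also have "\<dots> = (\<Sum>k. ennreal (2 * pi * r * (1/2) ^ k))"
  proof (rule suminf_cong)
    fix k :: nat
    have "integral\<^sup>N lborel (f k) = (\<integral>\<^sup>+ y. ennreal (2 ^ (k + 1) / r) * indicator (ball x (r / 2 ^ k)) y \<partial>lborel)"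
      unfolding f_def by (intro nn_integral_cong) (auto simp: indicator_def)
    also have "\<dots> = ennreal (2 ^ (k + 1) / r) * emeasure lborel (ball x (r / 2 ^ k))"
      by (rule nn_integral_cmult_indicator) simp
    also have "emeasure lborel (ball x (r / 2 ^ k)) = ennreal (pi * (r / 2 ^ k) ^ 2)"
      using emeasure_ball[of "r / 2 ^ k" x] r by (simp add: eval_unit_ball_vol)
    also have "ennreal (2 ^ (k + 1) / r) * ennreal (pi * (r / 2 ^ k) ^ 2) = ennreal (2 * pi * r * (1/2) ^ k)"
    proof -
      have "ennreal (2 ^ (k + 1) / r) * ennreal (pi * (r / 2 ^ k) ^ 2) = ennreal (2 ^ (k + 1) / r * (pi * (r / 2 ^ k) ^ 2))"
        using r by (intro ennreal_mult'[symmetric]) auto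
      also have "2 ^ (k + 1) / r * (pi * (r / 2 ^ k) ^ 2) = 2 * pi * r * (1/2) ^ k"
        using r by (simp add: power2_eq_square power_add power_divide field_simps)
      finally show ?thesis by simp
    qed
    finally show "integral\<^sup>N lborel (f k) = ennreal (2 * pi * r * (1/2) ^ k)" .
  qed
  also have "\<dots> = ennreal (\<Sum>k. 2 * pi * r * (1/2) ^ k)"
    using r by (intro suminf_ennreal2) (auto intro!: summable_mult summable_geometric)
  also have "(\<Sum>k. 2 * pi * r * (1/2::real) ^ k) = 4 * pi * r"
    using suminf_mult[OF summable_geometric[of "1/2::real"], of "2 * pi * r"] suminf_geometric[of "1/2::real"]
    by simp
  finally show ?thesis .
qed

lemma inv_norm_ball_integrable:
  fixes x :: complex
  assumes r: "0 < r"
  shows "integrable lborel (\<lambda>y. indicator (ball x r) y / norm (x - y))"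
    and "(\<integral>y. indicator (ball x r) y / norm (x - y) \<partial>lborel) \<le> 4 * pi * r"
proof -
  have m: "(\<lambda>y::complex. indicator (ball x r) y / norm (x - y)) \<in> borel_measurable lborel"
    by (intro borel_measurable_divide borel_measurable_indicator borel_measurable_continuous_onI continuous_intros) auto
  have "(\<integral>\<^sup>+ y. ennreal (norm (indicator (ball x r) y / norm (x - y))) \<partial>lborel) < \<infinity>"
  proof -
    have "(\<integral>\<^sup>+ y. ennreal (norm (indicator (ball x r) y / norm (x - y))) \<partial>lborel) =
          (\<integral>\<^sup>+ y. ennreal (indicator (ball x r) y / norm (x - y)) \<partial>lborel)"
      by (intro nn_integral_cong) (auto simp: indicator_def)
    also have "\<dots> \<le> ennreal (4 * pi * r)" by (rule inv_norm_ball_nn_integral[OF r])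
    finally show ?thesis by (simp add: le_less_trans)
  qed
  then show "integrable lborel (\<lambda>y. indicator (ball x r) y / norm (x - y))"
    by (rule integrableI_bounded[OF m])
  have "(\<integral>y. indicator (ball x r) y / norm (x - y) \<partial>lborel) =
        enn2real (\<integral>\<^sup>+ y. ennreal (indicator (ball x r) y / norm (x - y)) \<partial>lborel)"
    by (rule integral_eq_nn_integral[OF m]) auto
  also have "\<dots> \<le> 4 * pi * r"
    using inv_norm_ball_nn_integral[OF r, of x] r
    by (simp add: enn2real_leI)
  finally show "(\<integral>y. indicator (ball x r) y / norm (x - y) \<partial>lborel) \<le> 4 * pi * r" .
qed

lemma meas_lborel_cont:
  fixes f :: "complex \<Rightarrow> 'b::{banach,second_countable_topology}"
  assumes "continuous_on UNIV f"
  shows "f \<in> borel_measurable lborel"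
  using assms by (simp add: borel_measurable_continuous_onI)

lemma quot_alg:
  "x - y \<noteq> 0 \<Longrightarrow> w - y \<noteq> 0 \<Longrightarrow> x - w \<noteq> (0::complex) \<Longrightarrow>
    (a / (x - y) - a / (w - y)) / (x - w) = - (a / ((x - y) * (w - y)))"
  apply (simp add: divide_simps)
  apply (simp add: algebra_simps)
  done

lemma cauchy_transform_deriv:
  fixes \<phi> :: "complex \<Rightarrow> real" and w :: complex
  assumes meas: "\<phi> \<in> borel_measurable lborel"
    and bdd: "\<And>y. \<bar>\<phi> y\<bar> \<le> M"
    and supp: "\<And>y. \<phi> y \<noteq> 0 \<Longrightarrow> y \<in> ball w R"
    and \<delta>: "\<delta> > 0" and L: "L \<ge> 0"
    and lip: "\<And>y. dist y w < \<delta> \<Longrightarrow> \<bar>\<phi> y\<bar> \<le> L * dist y w"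
  shows "\<exists>Q. ((\<lambda>x. \<integral>y. complex_of_real (\<phi> y) / (x - y) \<partial>lborel) has_field_derivative Q) (at w)"
proof -
  have \<phi>w: "\<phi> w = 0" using lip[of w] \<delta> by simp
  have M0: "0 \<le> M" using bdd[of w] by simp
  have m\<phi>: "(\<lambda>y. complex_of_real (\<phi> y)) \<in> borel_measurable lborel"
    by (rule measurable_compose[OF meas]) (intro borel_measurable_continuous_onI continuous_intros)
  define k where "k x y = complex_of_real (\<phi> y) / (x - y)" for x y
  define F where "F x = integral\<^sup>L lborel (k x)" for x
  define g where "g x y = complex_of_real (\<phi> y) / ((x - y) * (w - y))" for x y
  define A where "A x = {y. 2 * dist x w \<le> dist y w}" for x
  define g1 where "g1 x y = indicator (A x) y * g x y" for x y
  define g2 where "g2 x y = g x y - g1 x y" for x y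
  define C where "C = 2 * (L + M / \<delta>)"
  define Dom where "Dom y = C * (indicator (ball w R) y / norm (w - y))" for y
  have C0: "C \<ge> 0" using L M0 \<delta> by (simp add: C_def)
  have mk: "k x \<in> borel_measurable lborel" for x
    unfolding k_def
    by (intro borel_measurable_divide m\<phi> meas_lborel_cont continuous_intros)
  have mg: "g x \<in> borel_measurable lborel" for x
    unfolding g_def
    by (intro borel_measurable_divide m\<phi> meas_lborel_cont continuous_intros)
  have mA: "A x \<in> sets lborel" for x
  proof -
    have "closed (A x)" unfolding A_def
      by (intro closed_Collect_le continuous_intros)
    then show ?thesis by simp
  qed
  have mg1: "g1 x \<in> borel_measurable lborel" for x
    unfolding g1_def
    by (intro borel_measurable_times borel_measurable_indicator mA mg)
  have kint: "integrable lborel (k x)" for x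
  proof -
    define R' where "R' = \<bar>R\<bar> + dist x w + 1"
    have R': "R' > 0" by (simp add: R'_def add_nonneg_pos)
    show ?thesis
    proof (rule Bochner_Integration.integrable_bound[OF integrable_mult_right[OF inv_norm_ball_integrable(1)[OF R', of x]] mk])
      show "AE y in lborel. norm (k x y) \<le> norm (M * (indicator (ball x R') y / norm (x - y)))"
      proof (rule AE_I2)
        fix y
        show "norm (k x y) \<le> norm (M * (indicator (ball x R') y / norm (x - y)))"
        proof (cases "\<phi> y = 0")
          case True then show ?thesis by (simp add: k_def)
        next
          case False
          then have "dist w y < R" using supp[of y] by (simp add: dist_commute)
          then have "y \<in> ball x R'" using dist_triangle[of x y w]
            by (simp add: R'_def dist_commute)
          then have ind: "indicator (ball x R') y = (1::real)" by simp
          have e1: "norm (M * (indicator (ball x R') y / norm (x - y))) = M / norm (x - y)"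
            using M0 unfolding ind by (simp add: norm_divide)
          have "norm (k x y) = \<bar>\<phi> y\<bar> / norm (x - y)"
            by (simp add: k_def norm_divide)
          also have "\<dots> \<le> M / norm (x - y)"
            using bdd[of y] by (simp add: divide_right_mono)
          also have "\<dots> = norm (M * (indicator (ball x R') y / norm (x - y)))" by (rule e1[symmetric])
          finally show ?thesis .
        qed
      qed
    qed
  qed
  have Domint: "integrable lborel Dom"
  proof -
    have "integrable lborel (\<lambda>y. C * (indicator (ball w (\<bar>R\<bar> + 1)) y / norm (w - y)))"
      by (intro integrable_mult_right inv_norm_ball_integrable(1)) (simp add: add_nonneg_pos)
    then show ?thesis
    proof (rule Bochner_Integration.integrable_bound)
      show "Dom \<in> borel_measurable lborel" unfolding Dom_def
        by (intro borel_measurable_times borel_measurable_divide borel_measurable_const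
            borel_measurable_indicator meas_lborel_cont continuous_intros) simp
      show "AE y in lborel. norm (Dom y) \<le> norm (C * (indicator (ball w (\<bar>R\<bar> + 1)) y / norm (w - y)))"
        using C0 by (intro AE_I2) (auto simp: Dom_def indicator_def)
    qed
  qed
  have dq: "(F x - F w) / (x - w) = - integral\<^sup>L lborel (g x)" and gint: "integrable lborel (g x)"
    if "x \<noteq> w" for x
  proof -
    have ae: "AE y in lborel. (k x y - k w y) / (x - w) = - g x y"
      using AE_lborel_singleton[of x]
    proof (rule AE_mp, intro AE_I2 impI)
      fix y assume "y \<noteq> x"
      show "(k x y - k w y) / (x - w) = - g x y"
      proof (cases "y = w")
        case True then show ?thesis by (simp add: k_def g_def \<phi>w)
      next
        case False
        then have "x - y \<noteq> 0" "w - y \<noteq> 0" "x - w \<noteq> 0" using \<open>y \<noteq> x\<close> that by auto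
        then show ?thesis unfolding k_def g_def by (rule quot_alg)
      qed
    qed
    have mdiff: "(\<lambda>y. (k x y - k w y) / (x - w)) \<in> borel_measurable lborel"
      by (intro borel_measurable_divide borel_measurable_diff mk borel_measurable_const)
    have "integrable lborel (\<lambda>y. (k x y - k w y) / (x - w))"
      using Bochner_Integration.integrable_diff[OF kint[of x] kint[of w]] by (rule integrable_divide_zero)
    then have "integrable lborel (\<lambda>y. - g x y)"
      using integrable_cong_AE[OF mdiff _ ae] mg[of x] by (simp add: borel_measurable_uminus)
    then show "integrable lborel (g x)" by simp
    have "(F x - F w) / (x - w) = integral\<^sup>L lborel (\<lambda>y. (k x y - k w y) / (x - w))"
      unfolding F_def by (simp add: integral_diff kint)
    also have "\<dots> = integral\<^sup>L lborel (\<lambda>y. - g x y)"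
      by (rule integral_cong_AE[OF mdiff borel_measurable_uminus[OF mg] ae])
    finally show "(F x - F w) / (x - w) = - integral\<^sup>L lborel (g x)" by simp
  qed
  have g1_bound: "norm (g1 x y) \<le> Dom y" for x y
  proof (cases "\<phi> y = 0 \<or> y \<notin> A x")
    case True
    have "Dom y \<ge> 0" using C0 by (simp add: Dom_def)
    then show ?thesis using True by (auto simp: g1_def g_def)
  next
    case False
    then have \<phi>y: "\<phi> y \<noteq> 0" and yA: "2 * dist x w \<le> dist y w" by (auto simp: A_def)
    have yb: "y \<in> ball w R" using supp[OF \<phi>y] .
    have yw: "y \<noteq> w" using \<phi>y \<phi>w by auto
    define \<rho> where "\<rho> = dist y w"
    have \<rho>: "\<rho> > 0" using yw by (simp add: \<rho>_def)
    have nwy: "norm (w - y) = \<rho>" by (simp add: \<rho>_def dist_norm norm_minus_commute)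
    have dxy: "norm (x - y) \<ge> \<rho> / 2"
      using dist_triangle[of y w x] yA by (simp add: \<rho>_def dist_norm norm_minus_commute)
    have C2: "C / 2 = L + M / \<delta>" by (simp add: C_def)
    have \<phi>b0: "\<bar>\<phi> y\<bar> \<le> (L + M / \<delta>) * \<rho>"
    proof (cases "\<rho> < \<delta>")
      case True
      then have "\<bar>\<phi> y\<bar> \<le> L * \<rho>" using lip[of y] by (simp add: \<rho>_def)
      also have "\<dots> \<le> (L + M / \<delta>) * \<rho>" using \<rho> M0 \<delta> by (intro mult_right_mono) auto
      finally show ?thesis .
    next
      case False
      have "\<bar>\<phi> y\<bar> \<le> M" by (rule bdd)
      also have "M = (M / \<delta>) * \<delta>" using \<delta> by simp
      also have "\<dots> \<le> (M / \<delta>) * \<rho>" using False M0 \<delta> by (intro mult_left_mono) auto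
      also have "\<dots> \<le> (L + M / \<delta>) * \<rho>" using \<rho> L by (intro mult_right_mono) auto
      finally show ?thesis .
    qed
    have \<phi>b: "\<bar>\<phi> y\<bar> \<le> (C / 2) * \<rho>" by (subst C2) (rule \<phi>b0)
    have "norm (g1 x y) = \<bar>\<phi> y\<bar> / (norm (x - y) * \<rho>)"
      using False by (simp add: g1_def g_def norm_divide norm_mult nwy)
    also have "\<dots> \<le> ((C / 2) * \<rho>) / (norm (x - y) * \<rho>)"
      using \<phi>b \<rho> by (intro divide_right_mono) auto
    also have "\<dots> = (C / 2) / norm (x - y)" using \<rho> by simp
    also have "\<dots> \<le> (C / 2) / (\<rho> / 2)"
    proof (rule divide_left_mono)
      show "\<rho> / 2 \<le> norm (x - y)" by (rule dxy)
      show "0 \<le> C / 2" using C0 by simp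
      have "norm (x - y) > 0" using dxy \<rho> by linarith
      then show "0 < norm (x - y) * (\<rho> / 2)" using \<rho> by simp
    qed
    also have "\<dots> = Dom y" using yb nwy by (simp add: Dom_def)
    finally show ?thesis .
  qed
  have g1int: "integrable lborel (g1 x)" for x
    by (rule Bochner_Integration.integrable_bound[OF Domint mg1])
       (intro AE_I2 order_trans[OF g1_bound], simp)
  have g2int: "integrable lborel (g2 x)" if "x \<noteq> w" for x
    unfolding g2_def using gint[OF that] g1int[of x] by (rule Bochner_Integration.integrable_diff)
  have g2_bound: "norm (g2 x y) \<le> L * (indicator (ball x (3 * dist x w)) y / norm (x - y))"
    if "2 * dist x w < \<delta>" for x y
  proof (cases "y \<in> A x \<or> y = w")
    case True
    then show ?thesis using L by (auto simp: g2_def g1_def g_def \<phi>w)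
  next
    case False
    then have yA: "dist y w < 2 * dist x w" and yw: "y \<noteq> w" by (auto simp: A_def)
    define \<rho> where "\<rho> = dist y w"
    have \<rho>: "\<rho> > 0" using yw by (simp add: \<rho>_def)
    have nwy: "norm (w - y) = \<rho>" by (simp add: \<rho>_def dist_norm norm_minus_commute)
    have \<phi>b: "\<bar>\<phi> y\<bar> \<le> L * \<rho>" using lip[of y] yA that by (simp add: \<rho>_def)
    have yb: "y \<in> ball x (3 * dist x w)"
      using dist_triangle[of x y w] yA by (simp add: dist_commute)
    have "norm (g2 x y) = \<bar>\<phi> y\<bar> / (norm (x - y) * \<rho>)"
      using False by (simp add: g2_def g1_def g_def norm_divide norm_mult nwy)
    also have "\<dots> \<le> (L * \<rho>) / (norm (x - y) * \<rho>)"
      using \<phi>b \<rho> by (intro divide_right_mono) auto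
    also have "\<dots> = L / norm (x - y)" using \<rho> by simp
    also have "\<dots> = L * (indicator (ball x (3 * dist x w)) y / norm (x - y))" using yb by simp
    finally show ?thesis .
  qed
  have g1w: "g1 w = g w" by (rule ext) (simp add: g1_def A_def)
  have lim1: "((\<lambda>x. integral\<^sup>L lborel (g1 x)) \<longlongrightarrow> integral\<^sup>L lborel (g w)) (at w)"
    unfolding tendsto_at_iff_sequentially comp_def
  proof (intro allI impI)
    fix X :: "nat \<Rightarrow> complex" assume X1: "\<forall>i. X i \<in> UNIV - {w}" and X2: "X \<longlonglongrightarrow> w"
    note X = X1 X2
    show "(\<lambda>i. integral\<^sup>L lborel (g1 (X i))) \<longlonglongrightarrow> integral\<^sup>L lborel (g w)"
    proof (rule integral_dominated_convergence[where w=Dom])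
      show "g w \<in> borel_measurable lborel" by (rule mg)
      show "g1 (X i) \<in> borel_measurable lborel" for i by (rule mg1)
      show "integrable lborel Dom" by (rule Domint)
      show "AE y in lborel. norm (g1 (X i) y) \<le> Dom y" for i by (intro AE_I2 g1_bound)
      show "AE y in lborel. (\<lambda>i. g1 (X i) y) \<longlonglongrightarrow> g w y"
      proof (rule AE_I2)
        fix y
        show "(\<lambda>i. g1 (X i) y) \<longlonglongrightarrow> g w y"
        proof (cases "y = w")
          case True
          then show ?thesis by (simp add: g1_def g_def \<phi>w)
        next
          case False
          then have pos: "dist y w / 2 > 0" by simp
          have "(\<lambda>i. dist (X i) w) \<longlonglongrightarrow> 0" using X(2) by (rule tendsto_dist_iff[THEN iffD1])
          then have ev: "eventually (\<lambda>i. dist (X i) w < dist y w / 2) sequentially"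
            using order_tendstoD(2)[OF _ pos] by blast
          have "(\<lambda>i. g (X i) y) \<longlonglongrightarrow> g w y"
            unfolding g_def using False
            by (intro tendsto_intros X(2)) auto
          moreover have "eventually (\<lambda>i. g (X i) y = g1 (X i) y) sequentially"
            using ev by eventually_elim (simp add: g1_def A_def)
          ultimately show ?thesis by (rule Lim_transform_eventually)
        qed
      qed
    qed
  qed
  have lim2: "((\<lambda>x. integral\<^sup>L lborel (g2 x)) \<longlongrightarrow> 0) (at w)"
  proof (rule Lim_null_comparison)
    show "((\<lambda>x. L * (4 * pi * (3 * dist x w))) \<longlongrightarrow> 0) (at w)"
    proof -
      have "((\<lambda>x. L * (4 * pi * (3 * dist x w))) \<longlongrightarrow> L * (4 * pi * (3 * dist w w))) (at w)"
        by (intro tendsto_intros)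
      then show ?thesis by simp
    qed
    show "eventually (\<lambda>x. norm (integral\<^sup>L lborel (g2 x)) \<le> L * (4 * pi * (3 * dist x w))) (at w)"
      unfolding eventually_at
    proof (intro exI[of _ "\<delta> / 2"] conjI ballI impI)
      show "\<delta> / 2 > 0" using \<delta> by simp
      fix x assume x: "x \<noteq> w \<and> dist x w < \<delta> / 2"
      then have r: "3 * dist x w > 0" and xd: "2 * dist x w < \<delta>" and xw: "x \<noteq> w" by auto
      have "norm (integral\<^sup>L lborel (g2 x)) \<le>
          integral\<^sup>L lborel (\<lambda>y. L * (indicator (ball x (3 * dist x w)) y / norm (x - y)))"
        by (rule Bochner_Integration.integral_norm_bound_integral[OF g2int[OF xw]])
           (use x g2_bound[OF xd] integrable_mult_right[OF inv_norm_ball_integrable(1)[OF r, of x], of L] in auto)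
      also have "\<dots> = L * integral\<^sup>L lborel (\<lambda>y. indicator (ball x (3 * dist x w)) y / norm (x - y))"
        by (rule integral_mult_right_zero)
      also have "\<dots> \<le> L * (4 * pi * (3 * dist x w))"
        using inv_norm_ball_integrable(2)[OF r, of x] L by (intro mult_left_mono) auto
      finally show "norm (integral\<^sup>L lborel (g2 x)) \<le> L * (4 * pi * (3 * dist x w))" .
    qed
  qed
  have "((\<lambda>x. (F x - F w) / (x - w)) \<longlongrightarrow> - (integral\<^sup>L lborel (g w) + 0)) (at w)"
  proof (rule Lim_transform_eventually)
    show "((\<lambda>x. - (integral\<^sup>L lborel (g1 x) + integral\<^sup>L lborel (g2 x))) \<longlongrightarrow> - (integral\<^sup>L lborel (g w) + 0)) (at w)"
      by (intro tendsto_intros lim1 lim2)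
    show "eventually (\<lambda>x. - (integral\<^sup>L lborel (g1 x) + integral\<^sup>L lborel (g2 x)) = (F x - F w) / (x - w)) (at w)"
      unfolding eventually_at
    proof (intro exI[of _ 1] conjI ballI impI)
      fix x assume "x \<noteq> w \<and> dist x w < 1"
      then have x: "x \<noteq> w" by auto
      have "integral\<^sup>L lborel (g1 x) + integral\<^sup>L lborel (g2 x) = integral\<^sup>L lborel (\<lambda>y. g1 x y + g2 x y)"
        by (rule Bochner_Integration.integral_add[symmetric, OF g1int g2int[OF x]])
      also have "(\<lambda>y. g1 x y + g2 x y) = g x" by (simp add: g2_def)
      finally show "- (integral\<^sup>L lborel (g1 x) + integral\<^sup>L lborel (g2 x)) = (F x - F w) / (x - w)"
        using dq[OF x] by simp
    qed simp
  qed
  then have "(F has_field_derivative - (integral\<^sup>L lborel (g w) + 0)) (at w)"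
    by (simp add: has_field_derivative_iff)
  moreover have "F = (\<lambda>x. \<integral>y. complex_of_real (\<phi> y) / (x - y) \<partial>lborel)"
    by (rule ext) (simp add: F_def k_def[abs_def])
  ultimately show ?thesis by auto
qed

lemma smooth_on_UNIV_deriv:
  assumes "smooth_on UNIV f"
  shows "(f has_derivative frechet_derivative f (at x)) (at x)"
proof -
  obtain U g where U: "open U" "UNIV \<subseteq> U" "\<forall>x\<in>UNIV. g x = f x" "\<forall>ds. iter_dd ds g differentiable_on U"
    using assms unfolding smooth_on_def by blast
  have "g = f" using U(3) by auto
  then have "f differentiable_on UNIV" using U(4)[rule_format, of "[]"] U(2) by (auto simp: top_unique)
  then show ?thesis by (rule diff_on_open_at) auto
qed

lemma slice_deriv:
  fixes G :: "real \<times> 'a::real_normed_vector \<Rightarrow> 'b::real_normed_vector"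
  assumes "open U" "(s, z) \<in> U" "G differentiable_on U"
  shows "((\<lambda>h. G (s, h)) has_derivative (\<lambda>h. frechet_derivative G (at (s, z)) (0, h))) (at z)"
proof -
  have "((\<lambda>h. (s, h)) has_derivative (\<lambda>h. (0, h))) (at z)"
    by (intro has_derivative_Pair has_derivative_const has_derivative_ident)
  from has_derivative_compose[OF this diff_on_open_at[OF assms(3,1,2)]]
  show ?thesis by simp
qed

lemma time_deriv:
  fixes G :: "real \<times> 'a::real_normed_vector \<Rightarrow> 'b::real_normed_vector"
  assumes "open U" "(s, z) \<in> U" "G differentiable_on U"
  shows "((\<lambda>\<sigma>. G (\<sigma>, z)) has_vector_derivative frechet_derivative G (at (s, z)) (1, 0)) (at s)"
proof -
  have "((\<lambda>h. (h, z)) has_derivative (\<lambda>h. (h, 0))) (at s)"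
    by (intro has_derivative_Pair has_derivative_const has_derivative_ident)
  from has_derivative_compose[OF this diff_on_open_at[OF assms(3,1,2)]]
  have d: "((\<lambda>\<sigma>. G (\<sigma>, z)) has_derivative (\<lambda>h. frechet_derivative G (at (s, z)) (h, 0))) (at s)" .
  have lin: "linear (frechet_derivative G (at (s, z)))"
    using diff_on_open_at[OF assms(3,1,2)] by (rule has_derivative_linear)
  have "(\<lambda>h. frechet_derivative G (at (s, z)) (h, 0)) = (\<lambda>h. h *\<^sub>R frechet_derivative G (at (s, z)) (1, 0))"
  proof
    fix h :: real
    have "(h, 0::'a) = h *\<^sub>R (1, 0)" by simp
    then show "frechet_derivative G (at (s, z)) (h, 0) = h *\<^sub>R frechet_derivative G (at (s, z)) (1, 0)"
      using linear.scaleR[OF lin] by metis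
  qed
  then show ?thesis using d by (simp add: has_vector_derivative_def)
qed

lemma v_deriv:
  fixes \<phi> :: "complex \<Rightarrow> real" and \<phi>0 :: "complex \<Rightarrow> real" and Y :: "complex \<Rightarrow> complex"
  assumes \<phi>d: "\<And>y. \<phi> differentiable (at y)"
    and Yc: "continuous_on UNIV Y"
    and Ysurj: "surj Y"
    and along: "\<And>z. \<phi> (Y z) = \<phi>0 z"
    and bdd0: "\<And>z. \<bar>\<phi>0 z\<bar> \<le> M"
    and supp0: "bounded {z. \<phi>0 z \<noteq> 0}"
    and w: "\<phi> w = 0"
    and V: "\<And>x. V x = (\<integral>y. kernel \<theta> (x - y) * of_real (\<phi> y) \<partial>lborel)"
  shows "\<exists>Q. (V has_field_derivative Q) (at w)"
proof -
  have cont: "continuous_on UNIV \<phi>"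
    using \<phi>d by (simp add: differentiable_imp_continuous_on differentiable_on_def differentiable_at_withinI)
  then have meas: "\<phi> \<in> borel_measurable lborel"
    by (simp add: borel_measurable_continuous_onI)
  have bdd: "\<bar>\<phi> y\<bar> \<le> M" for y
  proof -
    obtain z where "y = Y z" using Ysurj by (metis surjD)
    then show ?thesis using along[of z] bdd0[of z] by simp
  qed
  define S0 where "S0 = {z. \<phi>0 z \<noteq> 0}"
  have "compact (Y ` closure S0)"
    using supp0 Yc unfolding S0_def
    by (intro compact_continuous_image) (auto intro: continuous_on_subset)
  then have "bounded (Y ` closure S0)" by (rule compact_imp_bounded)
  then obtain R where R: "Y ` closure S0 \<subseteq> ball w R" using bounded_subset_ballD by blast
  have supp: "y \<in> ball w R" if "\<phi> y \<noteq> 0" for y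
  proof -
    obtain z where z: "y = Y z" using Ysurj by (metis surjD)
    then have "z \<in> S0" using that along[of z] by (simp add: S0_def)
    then have "y \<in> Y ` closure S0" using z closure_subset by blast
    then show ?thesis using R by blast
  qed
  obtain D where D: "(\<phi> has_derivative D) (at w)" using \<phi>d[of w] by (auto simp: differentiable_def)
  then have blD: "bounded_linear D" and
    ap: "\<forall>e>0. \<exists>d>0. \<forall>y. norm (y - w) < d \<longrightarrow> norm (\<phi> y - \<phi> w - D (y - w)) \<le> e * norm (y - w)"
    unfolding has_derivative_at_alt by auto
  obtain \<delta> where \<delta>: "\<delta> > 0" and \<delta>b: "\<And>y. norm (y - w) < \<delta> \<Longrightarrow> norm (\<phi> y - \<phi> w - D (y - w)) \<le> 1 * norm (y - w)"
    using ap[rule_format, of 1] by auto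
  obtain K where K: "K > 0" "\<And>h. norm (D h) \<le> norm h * K"
    using bounded_linear.pos_bounded[OF blD] by blast
  have lip: "\<bar>\<phi> y\<bar> \<le> (K + 1) * dist y w" if "dist y w < \<delta>" for y
  proof -
    have "norm (\<phi> y - \<phi> w - D (y - w)) \<le> 1 * norm (y - w)"
      using \<delta>b that by (simp add: dist_norm)
    moreover have "norm (D (y - w)) \<le> norm (y - w) * K" by (rule K(2))
    ultimately have "\<bar>\<phi> y\<bar> \<le> norm (y - w) * K + norm (y - w)" using w by simp
    then show ?thesis by (simp add: dist_norm algebra_simps)
  qed
  obtain Q0 where Q0: "((\<lambda>x. \<integral>y. complex_of_real (\<phi> y) / (x - y) \<partial>lborel) has_field_derivative Q0) (at w)"
    using cauchy_transform_deriv[OF meas bdd supp \<delta> _ lip] K by force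
  define c where "c = exp (\<i> * of_real \<theta>) / (2 * of_real pi)"
  have "V = (\<lambda>x. c * (\<integral>y. complex_of_real (\<phi> y) / (x - y) \<partial>lborel))"
  proof
    fix x
    have "V x = (\<integral>y. c * (complex_of_real (\<phi> y) / (x - y)) \<partial>lborel)"
      unfolding V kernel_def c_def by (intro Bochner_Integration.integral_cong) (simp_all add: field_simps)
    also have "\<dots> = c * (\<integral>y. complex_of_real (\<phi> y) / (x - y) \<partial>lborel)"
      by (rule integral_mult_right_zero)
    finally show "V x = c * (\<integral>y. complex_of_real (\<phi> y) / (x - y) \<partial>lborel)" .
  qed
  then have "(V has_field_derivative c * Q0) (at w)"
    using DERIV_cmult[OF Q0, of c] by simp
  then show ?thesis by blast
qed

theorem lemma4:
  fixes \<theta> :: real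
    and \<omega>0 :: "complex \<Rightarrow> real"
    and \<omega>0e :: "real \<Rightarrow> complex \<Rightarrow> real"
    and \<omega> :: "real \<Rightarrow> real \<Rightarrow> complex \<Rightarrow> real"
    and v :: "real \<Rightarrow> real \<Rightarrow> complex \<Rightarrow> complex"
    and X :: "real \<Rightarrow> real \<Rightarrow> complex \<Rightarrow> complex"
  assumes theta: "0 \<le> \<theta>" "\<theta> \<le> 2 * pi"
    and w0_meas: "\<omega>0 \<in> borel_measurable lborel"
    and w0_bdd: "\<exists>M. \<forall>z. \<bar>\<omega>0 z\<bar> \<le> M"
    and w0_supp: "bounded {z. \<omega>0 z \<noteq> 0}"
    and w0e_smooth: "\<And>\<epsilon>. \<epsilon> > 0 \<Longrightarrow> smooth_on UNIV (\<omega>0e \<epsilon>)"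
    and w0e_supp: "\<And>\<epsilon>. \<epsilon> > 0 \<Longrightarrow> bounded {z. \<omega>0e \<epsilon> z \<noteq> 0}"
    and w0e_inf: "\<And>\<epsilon> M. \<epsilon> > 0 \<Longrightarrow> (AE z in lborel. \<bar>\<omega>0 z\<bar> \<le> M) \<Longrightarrow> \<forall>z. \<bar>\<omega>0e \<epsilon> z\<bar> \<le> M"
    and w0e_L1: "\<And>\<epsilon>. \<epsilon> > 0 \<Longrightarrow>
        (LINT z|lborel. \<bar>\<omega>0e \<epsilon> z\<bar>) \<le> (LINT z|lborel. \<bar>\<omega>0 z\<bar>)"
    and w0e_conv: "((\<lambda>\<epsilon>. LINT z|lborel. \<bar>\<omega>0e \<epsilon> z - \<omega>0 z\<bar>) \<longlongrightarrow> 0) (at_right 0)"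
    and w_smooth: "\<And>\<epsilon>. \<epsilon> > 0 \<Longrightarrow> smooth_on ({0..} \<times> UNIV) (\<lambda>(t, x). \<omega> \<epsilon> t x)"
    and w_init: "\<And>\<epsilon> x. \<epsilon> > 0 \<Longrightarrow> \<omega> \<epsilon> 0 x = \<omega>0e \<epsilon> x"
    and v_def: "\<And>\<epsilon> t x. \<epsilon> > 0 \<Longrightarrow> t \<ge> 0 \<Longrightarrow>
        v \<epsilon> t x = (\<integral>y. kernel \<theta> (x - y) * of_real (\<omega> \<epsilon> t y) \<partial>lborel)"
    and transport: "\<And>\<epsilon> t x. \<epsilon> > 0 \<Longrightarrow> t \<ge> 0 \<Longrightarrow>
        ((\<lambda>s. \<omega> \<epsilon> s x) has_real_derivative
           (- frechet_derivative (\<omega> \<epsilon> t) (at x) (v \<epsilon> t x))) (at t within {0..})"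
    and X_smooth: "\<And>\<epsilon>. \<epsilon> > 0 \<Longrightarrow> smooth_on ({0..} \<times> UNIV) (\<lambda>(t, z). X \<epsilon> t z)"
    and X_diffeo: "\<And>\<epsilon> t. \<epsilon> > 0 \<Longrightarrow> t \<ge> 0 \<Longrightarrow> bij (X \<epsilon> t) \<and> smooth_on UNIV (inv (X \<epsilon> t))"
    and X_ode: "\<And>\<epsilon> t z. \<epsilon> > 0 \<Longrightarrow> t \<ge> 0 \<Longrightarrow>
        ((\<lambda>s. X \<epsilon> s z) has_vector_derivative v \<epsilon> t (X \<epsilon> t z)) (at t within {0..})"
    and X_init: "\<And>\<epsilon> z. \<epsilon> > 0 \<Longrightarrow> X \<epsilon> 0 z = z"
    and w_along_X: "\<And>\<epsilon> t z. \<epsilon> > 0 \<Longrightarrow> t \<ge> 0 \<Longrightarrow> \<omega> \<epsilon> t (X \<epsilon> t z) = \<omega>0e \<epsilon> z"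
  shows "\<forall>\<epsilon>>0. \<forall>t\<ge>0. \<forall>z. \<omega>0e \<epsilon> z = 0 \<longrightarrow> dbar (X \<epsilon> t) z = 0"
proof (intro allI impI)
  fix \<epsilon> t :: real and z :: complex
  assume \<epsilon>: "\<epsilon> > 0" and t: "t \<ge> 0" and z0: "\<omega>0e \<epsilon> z = 0"
  obtain U G where U: "open U" and U0: "{0..} \<times> UNIV \<subseteq> U"
    and eqG: "\<forall>p\<in>{0..} \<times> UNIV. G p = (\<lambda>(t, z). X \<epsilon> t z) p"
    and dG: "\<And>ds. iter_dd ds G differentiable_on U"
    using X_smooth[OF \<epsilon>] unfolding smooth_on_def by blast
  have GX: "G (s, y) = X \<epsilon> s y" if "s \<ge> 0" for s y using eqG that by auto
  have inU: "(s, y) \<in> U" if "s \<ge> 0" for s y using U0 that by auto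
  define DG where "DG p = frechet_derivative G (at p)" for p
  define A where "A s h = DG (s, z) (0, h)" for s h
  define Fd where "Fd d = (\<lambda>p. DG p (0, d))" for d
  define H where "H = (\<lambda>p. DG p (1, 0))"
  have G_diff: "G differentiable_on U" using dG[of "[]"] by simp
  have Fd_diff: "Fd d differentiable_on U" for d
    using dG[of "[(0, d)]"] by (simp add: Fd_def DG_def)
  have H_diff: "H differentiable_on U"
    using dG[of "[(1, 0)]"] by (simp add: H_def DG_def)
  have XA: "(X \<epsilon> s has_derivative A s) (at z)" if "s \<ge> 0" for s
  proof -
    have "((\<lambda>h. G (s, h)) has_derivative (\<lambda>h. DG (s, z) (0, h))) (at z)"
      unfolding DG_def by (rule slice_deriv[OF U inU[OF that] G_diff])
    moreover have "(\<lambda>h. G (s, h)) = X \<epsilon> s" using GX[OF that] by auto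
    ultimately show ?thesis by (simp add: A_def[abs_def])
  qed
  have HV: "H (s, y) = v \<epsilon> s (X \<epsilon> s y)" if s: "s \<ge> 0" for s y
  proof -
    have d1: "((\<lambda>\<sigma>. G (\<sigma>, y)) has_vector_derivative H (s, y)) (at s)"
      unfolding H_def DG_def by (rule time_deriv[OF U inU[OF s] G_diff])
    have d2: "((\<lambda>\<sigma>. X \<epsilon> \<sigma> y) has_vector_derivative H (s, y)) (at s within {s..s+1})"
      by (rule has_vector_derivative_transform[where f="\<lambda>\<sigma>. G (\<sigma>, y)"])
         (use GX s d1 in \<open>auto intro: has_vector_derivative_at_within\<close>)
    have d3: "((\<lambda>\<sigma>. X \<epsilon> \<sigma> y) has_vector_derivative v \<epsilon> s (X \<epsilon> s y)) (at s within {s..s+1})"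
      by (rule has_vector_derivative_within_subset[OF X_ode[OF \<epsilon> s]]) (use s in auto)
    show ?thesis
      using vector_derivative_unique_within_closed_interval[of s "s+1" s, simplified, OF d2 d3] .
  qed
  have Qex: "\<exists>Q. (v \<epsilon> s has_field_derivative Q) (at (X \<epsilon> s z))" if s: "s \<ge> 0" for s
  proof -
    obtain U2 G2 where U2: "open U2" and U20: "{0..} \<times> UNIV \<subseteq> U2"
      and eqG2: "\<forall>p\<in>{0..} \<times> UNIV. G2 p = (\<lambda>(t, x). \<omega> \<epsilon> t x) p"
      and dG2: "\<And>ds. iter_dd ds G2 differentiable_on U2"
      using w_smooth[OF \<epsilon>] unfolding smooth_on_def by blast
    have G2_diff: "G2 differentiable_on U2" using dG2[of "[]"] by simp
    have \<phi>d: "\<omega> \<epsilon> s differentiable (at y)" for y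
    proof -
      have "(s, y) \<in> U2" using U20 s by auto
      from slice_deriv[OF U2 this G2_diff]
      have "((\<lambda>h. G2 (s, h)) has_derivative (\<lambda>h. frechet_derivative G2 (at (s, y)) (0, h))) (at y)" .
      moreover have "(\<lambda>h. G2 (s, h)) = \<omega> \<epsilon> s" using eqG2 s by auto
      ultimately show ?thesis by (auto simp: differentiable_def)
    qed
    have Yc: "continuous_on UNIV (X \<epsilon> s)"
    proof -
      have "X \<epsilon> s differentiable (at y)" for y
      proof -
        have "((\<lambda>h. G (s, h)) has_derivative (\<lambda>h. DG (s, y) (0, h))) (at y)"
          unfolding DG_def by (rule slice_deriv[OF U inU[OF s] G_diff])
        moreover have "(\<lambda>h. G (s, h)) = X \<epsilon> s" using GX[OF s] by auto
        ultimately show ?thesis by (auto simp: differentiable_def)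
      qed
      then show ?thesis
        by (simp add: differentiable_imp_continuous_on differentiable_on_def differentiable_at_withinI)
    qed
    have Ysurj: "surj (X \<epsilon> s)" using X_diffeo[OF \<epsilon> s] by (simp add: bij_def)
    obtain M0 where M0: "\<forall>z. \<bar>\<omega>0 z\<bar> \<le> M0" using w0_bdd by blast
    have bdd0: "\<bar>\<omega>0e \<epsilon> y\<bar> \<le> M0" for y
      using w0e_inf[OF \<epsilon>, of M0] M0 by auto
    show ?thesis
      by (rule v_deriv[OF \<phi>d Yc Ysurj w_along_X[OF \<epsilon> s] bdd0 w0e_supp[OF \<epsilon>], where \<theta>=\<theta>])
         (use w_along_X[OF \<epsilon> s, of z] z0 v_def[OF \<epsilon> s] in auto)
  qed
  then obtain Q where Q: "\<And>s. s \<ge> 0 \<Longrightarrow> (v \<epsilon> s has_field_derivative Q s) (at (X \<epsilon> s z))"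
    by metis
  have DH: "frechet_derivative H (at (s, z)) (0, d) = Q s * A s d" if s: "s \<ge> 0" for s d
  proof -
    have l1: "((\<lambda>h. H (s, h)) has_derivative (\<lambda>h. frechet_derivative H (at (s, z)) (0, h))) (at z)"
      by (rule slice_deriv[OF U inU[OF s] H_diff])
    have "((\<lambda>h. v \<epsilon> s (X \<epsilon> s h)) has_derivative (\<lambda>h. Q s * A s h)) (at z)"
      using has_derivative_compose[OF XA[OF s] Q[OF s, unfolded has_field_derivative_def]] .
    moreover have "(\<lambda>h. v \<epsilon> s (X \<epsilon> s h)) = (\<lambda>h. H (s, h))" using HV[OF s] by auto
    ultimately have l2: "((\<lambda>h. H (s, h)) has_derivative (\<lambda>h. Q s * A s h)) (at z)" by simp
    from has_derivative_unique[OF l1 l2] show ?thesis by metis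
  qed
  have sym: "frechet_derivative (Fd d) (at (s, z)) (1, 0) = frechet_derivative H (at (s, z)) (0, d)"
    if s: "s \<ge> 0" for s d
  proof -
    have c1: "continuous_on U (\<lambda>q. frechet_derivative (\<lambda>q. frechet_derivative G (at q) (0, d)) (at q) (1, 0))"
      using dG[of "[(1, 0), (0, d)]"] by (simp add: differentiable_imp_continuous_on)
    have c2: "continuous_on U (\<lambda>q. frechet_derivative (\<lambda>q. frechet_derivative G (at q) (1, 0)) (at q) (0, d))"
      using dG[of "[(0, d), (1, 0)]"] by (simp add: differentiable_imp_continuous_on)
    show ?thesis
      using schwarz_frechet[OF U inU[OF s] G_diff Fd_diff[of d, unfolded Fd_def DG_def]
          H_diff[unfolded H_def DG_def] c1 c2]
      by (simp add: Fd_def H_def DG_def)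
  qed
  have At: "((\<lambda>\<sigma>. A \<sigma> d) has_vector_derivative Q s * A s d) (at s)" if s: "s \<ge> 0" for s d
  proof -
    have "((\<lambda>\<sigma>. Fd d (\<sigma>, z)) has_vector_derivative frechet_derivative (Fd d) (at (s, z)) (1, 0)) (at s)"
      by (rule time_deriv[OF U inU[OF s] Fd_diff])
    then show ?thesis using sym[OF s, of d] DH[OF s, of d] by (simp add: Fd_def A_def)
  qed
  have A1: "A s 1 \<noteq> 0" if s: "s \<ge> 0" for s
  proof
    assume A0: "A s 1 = 0"
    have "smooth_on UNIV (inv (X \<epsilon> s))" using X_diffeo[OF \<epsilon> s] by blast
    from smooth_on_UNIV_deriv[OF this]
    have dY: "(inv (X \<epsilon> s) has_derivative frechet_derivative (inv (X \<epsilon> s)) (at (X \<epsilon> s z))) (at (X \<epsilon> s z))" .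
    have "((\<lambda>h. inv (X \<epsilon> s) (X \<epsilon> s h)) has_derivative
        (\<lambda>h. frechet_derivative (inv (X \<epsilon> s)) (at (X \<epsilon> s z)) (A s h))) (at z)"
      by (rule has_derivative_compose[OF XA[OF s] dY])
    moreover have "(\<lambda>h. inv (X \<epsilon> s) (X \<epsilon> s h)) = (\<lambda>h. h)"
      using X_diffeo[OF \<epsilon> s] by (auto simp: bij_def inv_f_f)
    ultimately have d1: "((\<lambda>h. h) has_derivative
        (\<lambda>h. frechet_derivative (inv (X \<epsilon> s)) (at (X \<epsilon> s z)) (A s h))) (at z)" by simp
    have "(\<lambda>h. frechet_derivative (inv (X \<epsilon> s)) (at (X \<epsilon> s z)) (A s h)) = (\<lambda>h. h)"
      using has_derivative_unique[OF d1 has_derivative_ident] .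
    then have "frechet_derivative (inv (X \<epsilon> s)) (at (X \<epsilon> s z)) (A s 1) = 1" by metis
    moreover have "linear (frechet_derivative (inv (X \<epsilon> s)) (at (X \<epsilon> s z)))"
      using dY by (rule has_derivative_linear)
    ultimately show False using A0 by (simp add: linear_0)
  qed
  define P where "P s = A s 1" for s
  define R where "R s = A s \<i>" for s
  have dq: "((\<lambda>s. R s / P s) has_derivative (\<lambda>h. 0)) (at s within {0..t})"
    if s: "s \<in> {0..t}" for s
  proof -
    have s0: "s \<ge> 0" using s by auto
    have dP: "(P has_derivative (\<lambda>h. h *\<^sub>R (Q s * P s))) (at s within {0..t})"
      using At[OF s0, of 1] unfolding P_def[abs_def] has_vector_derivative_def
      by (rule has_derivative_at_withinI)
    have dR: "(R has_derivative (\<lambda>h. h *\<^sub>R (Q s * R s))) (at s within {0..t})"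
      using At[OF s0, of \<i>] unfolding R_def[abs_def] has_vector_derivative_def
      by (rule has_derivative_at_withinI)
    have "((\<lambda>s. R s / P s) has_derivative
        (\<lambda>h. (h *\<^sub>R (Q s * R s) * P s - R s * h *\<^sub>R (Q s * P s)) / (P s * P s))) (at s within {0..t})"
      by (rule has_derivative_divide'[OF dR dP]) (use A1[OF s0] in \<open>simp add: P_def\<close>)
    moreover have "(\<lambda>h. (h *\<^sub>R (Q s * R s) * P s - R s * h *\<^sub>R (Q s * P s)) / (P s * P s)) = (\<lambda>h. 0)"
      by (rule ext) (simp add: scaleR_conv_of_real algebra_simps)
    ultimately show ?thesis by simp
  qed
  obtain c where c: "\<forall>x\<in>{0..t}. R x / P x = c"
    using has_derivative_zero_constant[OF convex_real_interval(5) dq] by blast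
  have A0: "A 0 h = h" for h
  proof -
    have "X \<epsilon> 0 = (\<lambda>h. h)" using X_init[OF \<epsilon>] by auto
    then have "((\<lambda>h. h) has_derivative A 0) (at z)" using XA[of 0] by simp
    then have "(A 0) = (\<lambda>h. h)" using has_derivative_unique[OF _ has_derivative_ident] by blast
    then show ?thesis by simp
  qed
  have "R t / P t = R 0 / P 0" using c t by auto
  also have "\<dots> = \<i>" by (simp add: R_def P_def A0)
  finally have Rt: "R t = \<i> * P t" using A1[OF t] by (simp add: P_def field_simps)
  have "frechet_derivative (X \<epsilon> t) (at z) = A t"
    using frechet_derivative_at[OF XA[OF t]] by simp
  then show "dbar (X \<epsilon> t) z = 0"
    using Rt by (simp add: dbar_def P_def R_def)
qed

end
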